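(* Let $x\in X$ and let $\mathcal{Q}=\{P_\alpha(x),P_\beta(y)\}$ be a plaque chain of length $1$, so that $h_{\mathcal{Q}}(x)=y$. Then for all $n>0$, $$\mu_{n-1}(x)\le \mu_n(y)\cdot h_{\mathcal{Q}}'(x)\le\mu_{n+1}(x).$$
   Context: $M$ is a closed Riemannian manifold with a codimension-one $C^1$-foliation $\mathcal{F}$ with oriented normal bundle. Fix a finite regular foliation atlas of transversally orientation-preserving charts $\varphi_\alpha\colon U_\alpha\to(-1,1)^n\times(-1,1)$ with transverse coordinate spaces $X_\alpha=(-1,1)$, and $X$ their disjoint union; $P_\alpha(x)$ is the plaque of $U_\alpha$ with transverse coordinate $x$. The transition map $h_{\beta\alpha}$ sends $x$ to $y$ when $P_\alpha(x)\cap P_\beta(y)\neq\emptyset$. A plaque chain $\mathcal{P}$ of length $\|\mathcal{P}\|=k$ is a sequence $P_{\alpha_0}(x_0),\dots,P_{\alpha_k}(x_k)$ of plaques with consecutive ones intersecting; its holonomy $h_{\mathcal{P}}=h_{\alpha_k\alpha_{k-1}}\circ\cdots\circ h_{\alpha_1\alpha_0}$ has maximal connected open domain $D_{\mathcal{P}}\ni x_0$ where all partial compositions are defined; derivatives are positive. Define $\mu_0(x)=1$ and, for $n\ge1$, $\mu_n(x)=\sup\{h_{\mathcal{P}}'(x): x\in D_{\mathcal{P}},\ \|\mathcal{P}\|\le n\}$. *)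

theory Defs
  imports "HOL-Analysis.Analysis" "HOL-Library.Extended_Real"
begin

text \<open>A chart with index a
  is an open set U a together with a map phi a : U a -> (-1,1)^n x (-1,1);
  the second component is the transverse coordinate.\<close>

definition open_cube :: "(real^'n) set" where
  "open_cube = {v. \<forall>i. -1 < v $ i \<and> v $ i < 1}"

definition plaque ::
  "('i \<Rightarrow> 'm set) \<Rightarrow> ('i \<Rightarrow> 'm \<Rightarrow> (real^'n) \<times> real) \<Rightarrow> 'i \<Rightarrow> real \<Rightarrow> 'm set" where
  "plaque U \<phi> a x = {p \<in> U a. snd (\<phi> a p) = x}"

text \<open>Domain and value of the transition map h_{b a}: x maps to y iff
  P_a(x) meets P_b(y).\<close>
definition tdom ::
  "('i \<Rightarrow> 'm set) \<Rightarrow> ('i \<Rightarrow> 'm \<Rightarrow> (real^'n) \<times> real) \<Rightarrow> 'i \<Rightarrow> 'i \<Rightarrow> real set" where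
  "tdom U \<phi> b a = {x. \<exists>y. plaque U \<phi> a x \<inter> plaque U \<phi> b y \<noteq> {}}"

definition trans ::
  "('i \<Rightarrow> 'm set) \<Rightarrow> ('i \<Rightarrow> 'm \<Rightarrow> (real^'n) \<times> real) \<Rightarrow> 'i \<Rightarrow> 'i \<Rightarrow> real \<Rightarrow> real" where
  "trans U \<phi> b a x = (THE y. plaque U \<phi> a x \<inter> plaque U \<phi> b y \<noteq> {})"

text \<open>Finite regular foliation atlas of transversally orientation-preserving
  charts of a codimension-one C^1 foliation on a closed manifold (only the
  structure used by the statement is recorded).\<close>
definition reg_fol_atlas ::
  "'i set \<Rightarrow> ('i \<Rightarrow> 'm::topological_space set) \<Rightarrow> ('i \<Rightarrow> 'm \<Rightarrow> (real^'n) \<times> real) \<Rightarrow> bool" where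
  "reg_fol_atlas A U \<phi> \<longleftrightarrow>
     compact (UNIV :: 'm set) \<and> finite A \<and> A \<noteq> {} \<and>
     (\<Union>a\<in>A. U a) = UNIV \<and>
     (\<forall>a\<in>A. open (U a) \<and>
        (\<exists>g. homeomorphism (U a) (open_cube \<times> {-1<..<1}) (\<phi> a) g)) \<and>
     \<comment> \<open>regularity: a plaque of one chart meets at most one plaque of another\<close>
     (\<forall>a\<in>A. \<forall>b\<in>A. \<forall>x y y'.
        plaque U \<phi> a x \<inter> plaque U \<phi> b y \<noteq> {} \<longrightarrow>
        plaque U \<phi> a x \<inter> plaque U \<phi> b y' \<noteq> {} \<longrightarrow> y = y') \<and>
     \<comment> \<open>transition maps are C^1 on open domains, with positive derivative\<close>
     (\<forall>a\<in>A. \<forall>b\<in>A. open (tdom U \<phi> b a) \<and>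
        (\<forall>x\<in>tdom U \<phi> b a. \<exists>d>0. (trans U \<phi> b a has_real_derivative d) (at x)) \<and>
        continuous_on (tdom U \<phi> b a) (deriv (trans U \<phi> b a)))"

text \<open>A plaque chain is a nonempty list of (chart index, transverse coordinate)
  pairs, i.e. plaques, with consecutive plaques intersecting.  Its length is
  the number of entries minus one.\<close>
definition plaque_chain ::
  "'i set \<Rightarrow> ('i \<Rightarrow> 'm set) \<Rightarrow> ('i \<Rightarrow> 'm \<Rightarrow> (real^'n) \<times> real) \<Rightarrow> ('i \<times> real) list \<Rightarrow> bool" where
  "plaque_chain A U \<phi> cs \<longleftrightarrow> cs \<noteq> [] \<and>
     (\<forall>c\<in>set cs. fst c \<in> A \<and> snd c \<in> {-1<..<1}) \<and>
     (\<forall>i. Suc i < length cs \<longrightarrow>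
        plaque U \<phi> (fst (cs ! i)) (snd (cs ! i)) \<inter>
        plaque U \<phi> (fst (cs ! Suc i)) (snd (cs ! Suc i)) \<noteq> {})"

definition chain_len :: "('i \<times> real) list \<Rightarrow> nat" where
  "chain_len cs = length cs - 1"

fun hol_ch ::
  "('i \<Rightarrow> 'm set) \<Rightarrow> ('i \<Rightarrow> 'm \<Rightarrow> (real^'n) \<times> real) \<Rightarrow> 'i list \<Rightarrow> real \<Rightarrow> real" where
  "hol_ch U \<phi> [] = id"
| "hol_ch U \<phi> [a] = id"
| "hol_ch U \<phi> (a # b # r) = hol_ch U \<phi> (b # r) \<circ> trans U \<phi> b a"

fun defd_ch ::
  "('i \<Rightarrow> 'm set) \<Rightarrow> ('i \<Rightarrow> 'm \<Rightarrow> (real^'n) \<times> real) \<Rightarrow> 'i list \<Rightarrow> real set" where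
  "defd_ch U \<phi> [] = {-1<..<1}"
| "defd_ch U \<phi> [a] = {-1<..<1}"
| "defd_ch U \<phi> (a # b # r) =
     {x \<in> tdom U \<phi> b a. trans U \<phi> b a x \<in> defd_ch U \<phi> (b # r)}"

definition hol ::
  "('i \<Rightarrow> 'm set) \<Rightarrow> ('i \<Rightarrow> 'm \<Rightarrow> (real^'n) \<times> real) \<Rightarrow> ('i \<times> real) list \<Rightarrow> real \<Rightarrow> real" where
  "hol U \<phi> cs = hol_ch U \<phi> (map fst cs)"

definition hol_dom ::
  "('i \<Rightarrow> 'm set) \<Rightarrow> ('i \<Rightarrow> 'm \<Rightarrow> (real^'n) \<times> real) \<Rightarrow> ('i \<times> real) list \<Rightarrow> real set" where
  "hol_dom U \<phi> cs =
     connected_component_set (defd_ch U \<phi> (map fst cs)) (snd (hd cs))"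

definition mu ::
  "'i set \<Rightarrow> ('i \<Rightarrow> 'm set) \<Rightarrow> ('i \<Rightarrow> 'm \<Rightarrow> (real^'n) \<times> real) \<Rightarrow> nat \<Rightarrow> 'i \<Rightarrow> real \<Rightarrow> ereal" where
  "mu A U \<phi> n a x =
     (if n = 0 then 1 else
      (SUP cs \<in> {cs. plaque_chain A U \<phi> cs \<and> chain_len cs \<le> n \<and>
                    fst (hd cs) = a \<and> x \<in> hol_dom U \<phi> cs}.
         ereal (deriv (hol U \<phi> cs) x)))"

end

theory Submission
  imports Defs
begin

definition SS :: "'i set \<Rightarrow> ('i \<Rightarrow> 'm set) \<Rightarrow> ('i \<Rightarrow> 'm \<Rightarrow> (real^'n) \<times> real) \<Rightarrow> nat \<Rightarrow> 'i \<Rightarrow> real \<Rightarrow> 'i list set" where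
  "SS A U \<phi> n a x = {l. l \<noteq> [] \<and> set l \<subseteq> A \<and> hd l = a \<and> length l \<le> Suc n \<and> x \<in> defd_ch U \<phi> l}"

fun mk :: "('i \<Rightarrow> 'm set) \<Rightarrow> ('i \<Rightarrow> 'm \<Rightarrow> (real^'n) \<times> real) \<Rightarrow> 'i list \<Rightarrow> real \<Rightarrow> ('i \<times> real) list" where
  "mk U \<phi> [] x = []"
| "mk U \<phi> [a] x = [(a, x)]"
| "mk U \<phi> (a # b # r) x = (a, x) # mk U \<phi> (b # r) (trans U \<phi> b a x)"

lemma trans_eq:
  assumes "reg_fol_atlas A U \<phi>" "a \<in> A" "b \<in> A"
    and "plaque U \<phi> a x \<inter> plaque U \<phi> b y \<noteq> {}"
  shows "trans U \<phi> b a x = y"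
  unfolding trans_def
proof (rule the_equality)
  show "plaque U \<phi> a x \<inter> plaque U \<phi> b y \<noteq> {}" by fact
  fix y' assume "plaque U \<phi> a x \<inter> plaque U \<phi> b y' \<noteq> {}"
  with assms show "y' = y" unfolding reg_fol_atlas_def by blast
qed

lemma trans_prop:
  assumes "reg_fol_atlas A U \<phi>" "a \<in> A" "b \<in> A" "x \<in> tdom U \<phi> b a"
  shows "plaque U \<phi> a x \<inter> plaque U \<phi> b (trans U \<phi> b a x) \<noteq> {}"
proof -
  from assms(4) obtain y where y: "plaque U \<phi> a x \<inter> plaque U \<phi> b y \<noteq> {}"
    unfolding tdom_def by blast
  with trans_eq[OF assms(1-3) y] show ?thesis by simp
qed

lemma plaque_ne_range:
  assumes "reg_fol_atlas A U \<phi>" "a \<in> A" "plaque U \<phi> a x \<noteq> {}"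
  shows "x \<in> {-1<..<1}"
proof -
  from assms(3) obtain p where p: "p \<in> U a" "snd (\<phi> a p) = x" unfolding plaque_def by blast
  from assms(1,2) obtain g where "homeomorphism (U a) (open_cube \<times> {-1<..<1}) (\<phi> a) g"
    unfolding reg_fol_atlas_def by blast
  then have "\<phi> a ` U a = open_cube \<times> {-1<..<1}" unfolding homeomorphism_def by blast
  with p have "\<phi> a p \<in> open_cube \<times> {-1<..<1}" by blast
  with p show ?thesis by auto
qed

lemma defd_range:
  assumes "reg_fol_atlas A U \<phi>" "set l \<subseteq> A" "x \<in> defd_ch U \<phi> l"
  shows "x \<in> {-1<..<1}"
  using assms
proof (induction U \<phi> l rule: defd_ch.induct)
  case (3 U \<phi> a b r)
  then have "x \<in> tdom U \<phi> b a" by simp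
  then have "plaque U \<phi> a x \<noteq> {}" unfolding tdom_def by blast
  with plaque_ne_range[OF "3.prems"(1)] "3.prems"(2) show ?case by auto
qed auto

lemma chain_Cons2:
  "plaque_chain A U \<phi> ((a,x)#(b,y)#r) \<longleftrightarrow> a \<in> A \<and> x \<in> {-1<..<1} \<and>
     plaque U \<phi> a x \<inter> plaque U \<phi> b y \<noteq> {} \<and> plaque_chain A U \<phi> ((b,y)#r)"
proof
  assume h: "plaque_chain A U \<phi> ((a,x)#(b,y)#r)"
  then have h3: "\<And>i. Suc i < length ((a,x)#(b,y)#r) \<Longrightarrow>
        plaque U \<phi> (fst (((a,x)#(b,y)#r) ! i)) (snd (((a,x)#(b,y)#r) ! i)) \<inter>
        plaque U \<phi> (fst (((a,x)#(b,y)#r) ! Suc i)) (snd (((a,x)#(b,y)#r) ! Suc i)) \<noteq> {}"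
    unfolding plaque_chain_def by blast
  have "plaque U \<phi> a x \<inter> plaque U \<phi> b y \<noteq> {}" using h3[of 0] by simp
  moreover have "\<forall>i. Suc i < length ((b,y)#r) \<longrightarrow>
        plaque U \<phi> (fst (((b,y)#r) ! i)) (snd (((b,y)#r) ! i)) \<inter>
        plaque U \<phi> (fst (((b,y)#r) ! Suc i)) (snd (((b,y)#r) ! Suc i)) \<noteq> {}"
    using h3[of "Suc _"] by simp
  ultimately show "a \<in> A \<and> x \<in> {-1<..<1} \<and>
     plaque U \<phi> a x \<inter> plaque U \<phi> b y \<noteq> {} \<and> plaque_chain A U \<phi> ((b,y)#r)"
    using h unfolding plaque_chain_def by auto
next
  assume h: "a \<in> A \<and> x \<in> {-1<..<1} \<and>
     plaque U \<phi> a x \<inter> plaque U \<phi> b y \<noteq> {} \<and> plaque_chain A U \<phi> ((b,y)#r)"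
  then have h3: "\<And>i. Suc i < length ((b,y)#r) \<Longrightarrow>
        plaque U \<phi> (fst (((b,y)#r) ! i)) (snd (((b,y)#r) ! i)) \<inter>
        plaque U \<phi> (fst (((b,y)#r) ! Suc i)) (snd (((b,y)#r) ! Suc i)) \<noteq> {}"
    unfolding plaque_chain_def by blast
  have "\<forall>i. Suc i < length ((a,x)#(b,y)#r) \<longrightarrow>
        plaque U \<phi> (fst (((a,x)#(b,y)#r) ! i)) (snd (((a,x)#(b,y)#r) ! i)) \<inter>
        plaque U \<phi> (fst (((a,x)#(b,y)#r) ! Suc i)) (snd (((a,x)#(b,y)#r) ! Suc i)) \<noteq> {}"
  proof (intro allI impI)
    fix i assume "Suc i < length ((a,x)#(b,y)#r)"
    then show "plaque U \<phi> (fst (((a,x)#(b,y)#r) ! i)) (snd (((a,x)#(b,y)#r) ! i)) \<inter>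
        plaque U \<phi> (fst (((a,x)#(b,y)#r) ! Suc i)) (snd (((a,x)#(b,y)#r) ! Suc i)) \<noteq> {}"
      using h h3[of "i - 1"] by (cases i) auto
  qed
  then show "plaque_chain A U \<phi> ((a,x)#(b,y)#r)"
    using h unfolding plaque_chain_def by auto
qed

lemma chain_single: "plaque_chain A U \<phi> [(a,x)] \<longleftrightarrow> a \<in> A \<and> x \<in> {-1<..<1}"
  unfolding plaque_chain_def by auto

lemma mk_props:
  assumes "reg_fol_atlas A U \<phi>" "l \<noteq> []" "set l \<subseteq> A" "x \<in> defd_ch U \<phi> l"
  shows "plaque_chain A U \<phi> (mk U \<phi> l x) \<and> map fst (mk U \<phi> l x) = l \<and>
    hd (mk U \<phi> l x) = (hd l, x) \<and> length (mk U \<phi> l x) = length l"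
  using assms
proof (induction U \<phi> l x rule: mk.induct)
  case (2 U \<phi> a x)
  then show ?case by (simp add: chain_single)
next
  case (3 U \<phi> a b r x)
  have x: "x \<in> tdom U \<phi> b a" and y: "trans U \<phi> b a x \<in> defd_ch U \<phi> (b # r)"
    using "3.prems" by auto
  have ab: "a \<in> A" "b \<in> A" using "3.prems" by auto
  have IH: "plaque_chain A U \<phi> (mk U \<phi> (b # r) (trans U \<phi> b a x)) \<and>
      map fst (mk U \<phi> (b # r) (trans U \<phi> b a x)) = b # r \<and>
      hd (mk U \<phi> (b # r) (trans U \<phi> b a x)) = (b, trans U \<phi> b a x) \<and>
      length (mk U \<phi> (b # r) (trans U \<phi> b a x)) = length (b # r)"
    using "3.IH" "3.prems" y by auto
  then obtain t where t: "mk U \<phi> (b # r) (trans U \<phi> b a x) = (b, trans U \<phi> b a x) # t"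
    by (cases "mk U \<phi> (b # r) (trans U \<phi> b a x)") auto
  have xr: "x \<in> {-1<..<1}" using defd_range[OF "3.prems"(1) "3.prems"(3) "3.prems"(4)] .
  have "plaque_chain A U \<phi> ((a, x) # (b, trans U \<phi> b a x) # t)"
    unfolding chain_Cons2 using ab xr trans_prop[OF "3.prems"(1) ab x] IH t by simp
  then show ?case using IH t by simp
qed auto

lemma hol_deriv:
  assumes "reg_fol_atlas A U \<phi>" "l \<noteq> []" "set l \<subseteq> A" "x \<in> defd_ch U \<phi> l"
  shows "\<exists>D>0. (hol_ch U \<phi> l has_real_derivative D) (at x)"
  using assms
proof (induction U \<phi> l arbitrary: x rule: hol_ch.induct)
  case (2 U \<phi> a)
  show ?case by (intro exI[of _ 1]) (auto simp: id_def)
next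
  case (3 U \<phi> a b r)
  have x: "x \<in> tdom U \<phi> b a" and y: "trans U \<phi> b a x \<in> defd_ch U \<phi> (b # r)"
    using "3.prems" by auto
  have ab: "a \<in> A" "b \<in> A" using "3.prems" by auto
  obtain d where d: "d > 0" "(trans U \<phi> b a has_real_derivative d) (at x)"
    using "3.prems"(1) ab x unfolding reg_fol_atlas_def by blast
  obtain D where D: "D > 0" "(hol_ch U \<phi> (b # r) has_real_derivative D) (at (trans U \<phi> b a x))"
    using "3.IH"[of "trans U \<phi> b a x"] "3.prems" y by auto
  have "(hol_ch U \<phi> (b # r) \<circ> trans U \<phi> b a has_real_derivative D * d) (at x)"
    by (rule DERIV_chain[OF D(2) d(2)])
  then show ?case using d D by (intro exI[of _ "D * d"]) (simp add: o_def)
qed auto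

lemma hol_deriv_Cons:
  assumes "reg_fol_atlas A U \<phi>" "a \<in> A" "set l \<subseteq> A" "l = b # r"
    and "x \<in> tdom U \<phi> b a" "trans U \<phi> b a x \<in> defd_ch U \<phi> l"
  shows "deriv (hol_ch U \<phi> (a # l)) x = deriv (hol_ch U \<phi> l) (trans U \<phi> b a x) * deriv (trans U \<phi> b a) x"
proof -
  have b: "b \<in> A" using assms by auto
  obtain d where d: "(trans U \<phi> b a has_real_derivative d) (at x)"
    using assms(1,2,5) b unfolding reg_fol_atlas_def by blast
  obtain D where D: "(hol_ch U \<phi> l has_real_derivative D) (at (trans U \<phi> b a x))"
    using hol_deriv[OF assms(1) _ assms(3) assms(6)] assms(4) by auto
  have "(hol_ch U \<phi> l \<circ> trans U \<phi> b a has_real_derivative D * d) (at x)"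
    by (rule DERIV_chain[OF D d])
  then have "deriv (hol_ch U \<phi> (a # l)) x = D * d"
    using assms(4) by (simp add: DERIV_imp_deriv)
  then show ?thesis using DERIV_imp_deriv[OF D] DERIV_imp_deriv[OF d] by simp
qed

lemma mu_eq:
  assumes "reg_fol_atlas A U \<phi>" "a \<in> A" "x \<in> {-1<..<1}"
  shows "mu A U \<phi> n a x = (SUP l\<in>SS A U \<phi> n a x. ereal (deriv (hol_ch U \<phi> l) x))"
proof (cases "n = 0")
  case True
  have "SS A U \<phi> n a x = {[a]}"
  proof
    show "SS A U \<phi> n a x \<subseteq> {[a]}"
    proof
      fix l assume "l \<in> SS A U \<phi> n a x"
      then have "l \<noteq> []" "hd l = a" "length l \<le> 1" using True unfolding SS_def by auto
      then show "l \<in> {[a]}" by (cases l) auto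
    qed
    show "{[a]} \<subseteq> SS A U \<phi> n a x" using assms True unfolding SS_def by auto
  qed
  moreover have "deriv (id :: real \<Rightarrow> real) x = 1"
    by (rule DERIV_imp_deriv) (auto simp: id_def)
  ultimately show ?thesis using True unfolding mu_def by simp
next
  case False
  define C where "C = {cs. plaque_chain A U \<phi> cs \<and> chain_len cs \<le> n \<and>
                    fst (hd cs) = a \<and> x \<in> hol_dom U \<phi> cs}"
  have mu: "mu A U \<phi> n a x = (SUP cs\<in>C. ereal (deriv (hol_ch U \<phi> (map fst cs)) x))"
    using False unfolding mu_def C_def hol_def by simp
  have img: "map fst ` C = SS A U \<phi> n a x"
  proof
    show "map fst ` C \<subseteq> SS A U \<phi> n a x"
    proof
      fix l assume "l \<in> map fst ` C"
      then obtain cs where cs: "cs \<in> C" "l = map fst cs" by blast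
      then have pc: "plaque_chain A U \<phi> cs" and len: "chain_len cs \<le> n"
        and hd: "fst (hd cs) = a" and xd: "x \<in> hol_dom U \<phi> cs" unfolding C_def by auto
      have "cs \<noteq> []" using pc unfolding plaque_chain_def by auto
      moreover have "set l \<subseteq> A" using pc cs(2) unfolding plaque_chain_def by auto
      moreover have "x \<in> defd_ch U \<phi> l"
        using xd cs(2) connected_component_subset unfolding hol_dom_def by blast
      ultimately show "l \<in> SS A U \<phi> n a x"
        using len hd cs(2) unfolding SS_def chain_len_def by (auto simp: hd_map)
    qed
    show "SS A U \<phi> n a x \<subseteq> map fst ` C"
    proof
      fix l assume l: "l \<in> SS A U \<phi> n a x"
      then have l1: "l \<noteq> []" "set l \<subseteq> A" "x \<in> defd_ch U \<phi> l" "hd l = a" "length l \<le> Suc n"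
        unfolding SS_def by auto
      note M = mk_props[OF assms(1) l1(1-3)]
      have "mk U \<phi> l x \<in> C"
        unfolding C_def hol_dom_def chain_len_def using M l1 by auto
      then show "l \<in> map fst ` C" using M by (metis image_eqI)
    qed
  qed
  show ?thesis unfolding mu img[symmetric] by (simp add: image_comp o_def)
qed

lemma trans_inv:
  assumes "reg_fol_atlas A U \<phi>" "a \<in> A" "b \<in> A" "x \<in> tdom U \<phi> b a"
  shows "trans U \<phi> b a x \<in> tdom U \<phi> a b" "trans U \<phi> a b (trans U \<phi> b a x) = x"
proof -
  have h: "plaque U \<phi> b (trans U \<phi> b a x) \<inter> plaque U \<phi> a x \<noteq> {}"
    using trans_prop[OF assms] by blast
  then show "trans U \<phi> b a x \<in> tdom U \<phi> a b" unfolding tdom_def by blast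
  show "trans U \<phi> a b (trans U \<phi> b a x) = x" by (rule trans_eq[OF assms(1,3,2) h])
qed

lemma deriv_inv:
  assumes "reg_fol_atlas A U \<phi>" "a \<in> A" "b \<in> A" "x \<in> tdom U \<phi> b a"
  shows "deriv (trans U \<phi> a b) (trans U \<phi> b a x) * deriv (trans U \<phi> b a) x = 1"
proof -
  have y: "trans U \<phi> b a x \<in> tdom U \<phi> a b" using trans_inv[OF assms] by simp
  obtain d where d: "(trans U \<phi> b a has_real_derivative d) (at x)"
    using assms unfolding reg_fol_atlas_def by blast
  obtain e where e: "(trans U \<phi> a b has_real_derivative e) (at (trans U \<phi> b a x))"
    using assms y unfolding reg_fol_atlas_def by blast
  have c: "(trans U \<phi> a b \<circ> trans U \<phi> b a has_real_derivative e * d) (at x)"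
    by (rule DERIV_chain[OF e d])
  have op: "open (tdom U \<phi> b a)" using assms unfolding reg_fol_atlas_def by blast
  have "((\<lambda>t. t) has_real_derivative 1) (at x)" by simp
  then have "(trans U \<phi> a b \<circ> trans U \<phi> b a has_real_derivative 1) (at x)"
    by (rule has_field_derivative_transform_within_open[OF _ op assms(4)])
       (simp add: trans_inv(2)[OF assms(1-3)])
  then have "e * d = 1" using c DERIV_unique by blast
  then show ?thesis using DERIV_imp_deriv[OF d] DERIV_imp_deriv[OF e] by simp
qed

theorem lemma4p1:
  fixes A :: "'i set" and U :: "'i \<Rightarrow> 'm::topological_space set"
    and \<phi> :: "'i \<Rightarrow> 'm \<Rightarrow> (real^'n) \<times> real"
    and a b :: 'i and x y :: real and n :: nat
  assumes "reg_fol_atlas A U \<phi>"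
    and "plaque_chain A U \<phi> [(a, x), (b, y)]"
    and "n > 0"
  shows "mu A U \<phi> (n - 1) a x
           \<le> mu A U \<phi> n b y * ereal (deriv (hol U \<phi> [(a, x), (b, y)]) x)
       \<and> mu A U \<phi> n b y * ereal (deriv (hol U \<phi> [(a, x), (b, y)]) x)
           \<le> mu A U \<phi> (n + 1) a x"
proof -
  note R = assms(1)
  have ab: "a \<in> A" "b \<in> A" and xr: "x \<in> {-1<..<1}" and yr: "y \<in> {-1<..<1}"
    and pl: "plaque U \<phi> a x \<inter> plaque U \<phi> b y \<noteq> {}"
    using assms(2) unfolding chain_Cons2 chain_single by auto
  have xt: "x \<in> tdom U \<phi> b a" using pl unfolding tdom_def by blast
  have ty: "trans U \<phi> b a x = y" by (rule trans_eq[OF R ab pl])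
  have yt: "y \<in> tdom U \<phi> a b" and tx: "trans U \<phi> a b y = x"
    using trans_inv[OF R ab xt] ty by auto
  define d where "d = deriv (trans U \<phi> b a) x"
  define e where "e = deriv (trans U \<phi> a b) y"
  have ed: "e * d = 1" using deriv_inv[OF R ab xt] ty unfolding d_def e_def by simp
  obtain d' where d': "d' > 0" "(trans U \<phi> b a has_real_derivative d') (at x)"
    using R ab xt unfolding reg_fol_atlas_def by blast
  have dpos: "d > 0" using DERIV_imp_deriv[OF d'(2)] d'(1) unfolding d_def by simp
  have hol: "hol U \<phi> [(a, x), (b, y)] = trans U \<phi> b a"
    unfolding hol_def by simp
  have muy: "mu A U \<phi> n b y = (SUP l\<in>SS A U \<phi> n b y. ereal (deriv (hol_ch U \<phi> l) y))"
    by (rule mu_eq[OF R ab(2) yr])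
  have low: "mu A U \<phi> (n - 1) a x \<le> mu A U \<phi> n b y * ereal d"
    unfolding mu_eq[OF R ab(1) xr]
  proof (rule SUP_least)
    fix l assume l: "l \<in> SS A U \<phi> (n - 1) a x"
    then have l1: "l \<noteq> []" "set l \<subseteq> A" "x \<in> defd_ch U \<phi> l" "hd l = a" "length l \<le> n"
      unfolding SS_def using assms(3) by auto
    then obtain r where lr: "l = a # r" by (cases l) auto
    have bl: "b # l \<in> SS A U \<phi> n b y"
      unfolding SS_def using l1 lr yt tx ab by auto
    have dv: "deriv (hol_ch U \<phi> (b # l)) y = deriv (hol_ch U \<phi> l) x * e"
      using hol_deriv_Cons[OF R ab(2) l1(2) lr yt] tx l1(3) unfolding e_def by simp
    have "ereal (deriv (hol_ch U \<phi> (b # l)) y) \<le> mu A U \<phi> n b y"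
      unfolding muy by (rule SUP_upper[OF bl])
    then have "ereal (deriv (hol_ch U \<phi> (b # l)) y) * ereal d \<le> mu A U \<phi> n b y * ereal d"
      by (rule ereal_mult_right_mono) (use dpos in simp)
    moreover have "ereal (deriv (hol_ch U \<phi> (b # l)) y) * ereal d = ereal (deriv (hol_ch U \<phi> l) x)"
      using dv ed by (simp add: mult.assoc)
    ultimately show "ereal (deriv (hol_ch U \<phi> l) x) \<le> mu A U \<phi> n b y * ereal d" by simp
  qed
  have ne: "SS A U \<phi> n b y \<noteq> {}"
  proof -
    have "[b] \<in> SS A U \<phi> n b y" unfolding SS_def using ab yr by auto
    then show ?thesis by blast
  qed
  have up: "mu A U \<phi> n b y * ereal d \<le> mu A U \<phi> (n + 1) a x"
    unfolding muy Sup_ereal_mult_right'[OF ne, of d, OF less_imp_le[OF dpos]]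
  proof -
    show "(SUP l\<in>SS A U \<phi> n b y. ereal (deriv (hol_ch U \<phi> l) y) * ereal d) \<le> mu A U \<phi> (n + 1) a x"
    proof (rule SUP_least)
      fix l assume l: "l \<in> SS A U \<phi> n b y"
      then have l1: "l \<noteq> []" "set l \<subseteq> A" "y \<in> defd_ch U \<phi> l" "hd l = b" "length l \<le> Suc n"
        unfolding SS_def by auto
      then obtain r where lr: "l = b # r" by (cases l) auto
      have al: "a # l \<in> SS A U \<phi> (n + 1) a x"
        unfolding SS_def using l1 lr xt ty ab by auto
      have dv: "deriv (hol_ch U \<phi> (a # l)) x = deriv (hol_ch U \<phi> l) y * d"
        using hol_deriv_Cons[OF R ab(1) l1(2) lr xt] ty l1(3) unfolding d_def by simp
      have "ereal (deriv (hol_ch U \<phi> (a # l)) x) \<le> mu A U \<phi> (n + 1) a x"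
        unfolding mu_eq[OF R ab(1) xr] by (rule SUP_upper[OF al])
      then show "ereal (deriv (hol_ch U \<phi> l) y) * ereal d \<le> mu A U \<phi> (n + 1) a x"
        using dv by simp
    qed
  qed
  show ?thesis using low up unfolding hol d_def by simp
qed

end
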